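(* Let $(X,\mathcal A,\mathbb P)$ be a probability space with relations $\le_k$, $k\in[m]$, as in the context, let $N\ge m$ and $\alpha\in[0,1]$. Suppose there exist real-valued random variables $\tau_k$, $k\in[m]$, on $(X,\mathcal A,\mathbb P)$ such that for all $x,y\in X$, $\tau_k(x)\le\tau_k(y)$ implies $x\le_ky$. Then \[\mathbb P^N\{\mathbf x\in X^N:\mathfrak D(\mathbf x)<1-\alpha\}\le\sum_{k=0}^{m-1}\binom{N}{k}\alpha^k(1-\alpha)^{N-k}.\]
   Context: $(X,\mathcal A,\mathbb P)$ is a probability space, $m\in\mathbb N$, $[m]=\{1,\dots,m\}$. For each $k\in[m]$, $\le_k$ is a reflexive, transitive, total relation on $X$ (antisymmetry not required); $x=_ky$ means $x\le_ky$ and $y\le_kx$; $\mathcal A$ contains $\{y:y=_kx\}$ and $\{y:y\le_kx\}$ for all $x,k$. $\mathbb P^N$ is the completion of the product measure on $X^N$. For $\mathbf x=(x_1,\dots,x_N)\in X^N$, $h_k(\mathbf x)$ is an entry $y$ of $\mathbf x$ with $y\le_kx_i$ for all $i$, and $\mathfrak D(\mathbf x)=\mathbb P\{x\in X:h_k(\mathbf x)\le_kx\text{ for all }k\in[m]\}$. *)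

theory Defs
  imports "HOL-Probability.Probability"
begin

text \<open>A tuple in X^N is represented as a function xs :: nat => 'a on the index set {..<N}.
  le k is the relation \<le>_k.  minent le k N xs is h_k(xs): an entry of xs that is
  \<le>_k-below all entries (chosen by Hilbert choice; the value of D does not depend on the choice).\<close>

definition minent :: "(nat \<Rightarrow> 'a \<Rightarrow> 'a \<Rightarrow> bool) \<Rightarrow> nat \<Rightarrow> nat \<Rightarrow> (nat \<Rightarrow> 'a) \<Rightarrow> 'a" where
  "minent le k N xs = (SOME y. y \<in> xs ` {..<N} \<and> (\<forall>i<N. le k y (xs i)))"

definition depthD :: "'a measure \<Rightarrow> (nat \<Rightarrow> 'a \<Rightarrow> 'a \<Rightarrow> bool) \<Rightarrow> nat \<Rightarrow> nat \<Rightarrow> (nat \<Rightarrow> 'a) \<Rightarrow> real" where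
  "depthD M le m N xs = measure M {x \<in> space M. \<forall>k\<in>{1..m}. le k (minent le k N xs) x}"

end

theory Submission
  imports Defs "HOL-Probability.Probability"
begin



definition fb :: "nat \<Rightarrow> nat \<Rightarrow> real \<Rightarrow> real" where
  "fb N m \<alpha> = (\<Sum>k = 0..<m. real (N choose k) * \<alpha> ^ k * (1 - \<alpha>) ^ (N - k))"

lemma poly_has_integral:
  fixes a c :: real
  assumes "a \<le> c"
  shows "((\<lambda>g. (c - g) ^ j) has_integral ((c - a) ^ Suc j / Suc j)) {a..c}"
proof -
  have "((\<lambda>g. (c - g) ^ j) has_integral
          ((\<lambda>g. - ((c - g) ^ Suc j / Suc j)) c - (\<lambda>g. - ((c - g) ^ Suc j / Suc j)) a)) {a..c}"
  proof (rule fundamental_theorem_of_calculus[OF assms])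
    fix x assume "x \<in> {a..c}"
    have e: "real j * (c - x) ^ (j - Suc 0) * (c - x) = real j * (c - x) ^ j" by (cases j) auto
    have "((\<lambda>g. - ((c - g) ^ Suc j / Suc j)) has_real_derivative (c - x) ^ j) (at x within {a..c})"
      apply (auto intro!: derivative_eq_intros)
      apply (simp only: e)
      by (simp add: field_simps)
    then show "((\<lambda>g. - ((c - g) ^ Suc j / Suc j)) has_vector_derivative (c - x) ^ j) (at x within {a..c})"
      by (simp add: has_real_derivative_iff_has_vector_derivative)
  qed
  then show ?thesis by simp
qed

lemma poly_nn_integral:
  fixes a c :: real
  assumes "a \<le> c"
  shows "(\<integral>\<^sup>+ g. indicator {a..c} g * ennreal ((c - g) ^ j) \<partial>lborel) = ennreal ((c - a) ^ Suc j / Suc j)"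
proof -
  have "(\<integral>\<^sup>+ g. ennreal ((c - g) ^ j) * indicator {a..c} g \<partial>lborel) = ennreal ((c - a) ^ Suc j / Suc j)"
    by (rule nn_integral_has_integral_lebesgue'[OF _ poly_has_integral[OF assms]]) auto
  then show ?thesis by (simp add: mult.commute)
qed

lemma calc_main:
  fixes b \<alpha> :: real and N m :: nat
  assumes b: "0 \<le> b" and a0: "0 \<le> \<alpha>" and a1: "\<alpha> \<le> 1" and m: "1 \<le> m" "m \<le> N"
  defines "H \<equiv> (\<lambda>g. if g < \<alpha> * b then (b - g) ^ (N - 1) * fb (N - 1) (m - 1) ((\<alpha> * b - g) / (b - g))
                   else (b - g) ^ (N - 1))"
  shows "ennreal (real N) * (\<integral>\<^sup>+ g. indicator {0..b} g * ennreal (H g) \<partial>lborel) = ennreal (b ^ N * fb N m \<alpha>)"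
proof -
  define n where "n = N - 1"
  define m' where "m' = m - 1"
  have N: "N = Suc n" using m unfolding n_def by auto
  have mm: "m = Suc m'" using m unfolding m'_def by auto
  have m'n: "m' \<le> n" using m unfolding n_def m'_def by auto
  define P1 where "P1 = (\<lambda>g. \<Sum>j<m'. real (n choose j) * ((1 - \<alpha>) * b) ^ (n - j) * (\<alpha> * b - g) ^ j)"
  have ab: "\<alpha> * b \<le> b" using mult_left_le_one_le[OF b a0 a1] .
  have ab0: "0 \<le> \<alpha> * b" using a0 b by simp
  have H1: "H g = P1 g" if "0 \<le> g" "g < \<alpha> * b" for g
  proof -
    have gb: "g < b" using that ab by simp
    have "H g = (b - g) ^ n * fb n m' ((\<alpha> * b - g) / (b - g))"
      using that by (simp add: H_def n_def m'_def)
    also have "\<dots> = (\<Sum>j = 0..<m'. (b - g) ^ n * (real (n choose j) * ((\<alpha> * b - g) / (b - g)) ^ j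
                      * (1 - (\<alpha> * b - g) / (b - g)) ^ (n - j)))"
      by (simp add: fb_def sum_distrib_left)
    also have "\<dots> = (\<Sum>j = 0..<m'. real (n choose j) * ((1 - \<alpha>) * b) ^ (n - j) * (\<alpha> * b - g) ^ j)"
    proof (rule sum.cong[OF refl])
      fix j assume "j \<in> {0..<m'}"
      then have jn: "j \<le> n" using m'n by auto
      have e1: "1 - (\<alpha> * b - g) / (b - g) = ((1 - \<alpha>) * b) / (b - g)" using gb by (simp add: field_simps)
      have e2: "(b - g) ^ n = (b - g) ^ j * (b - g) ^ (n - j)" using jn by (simp add: power_add[symmetric])
      show "(b - g) ^ n * (real (n choose j) * ((\<alpha> * b - g) / (b - g)) ^ j * (1 - (\<alpha> * b - g) / (b - g)) ^ (n - j))
            = real (n choose j) * ((1 - \<alpha>) * b) ^ (n - j) * (\<alpha> * b - g) ^ j"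
        unfolding e1 e2 using gb by (simp add: power_divide field_simps)
    qed
    finally show ?thesis by (simp add: P1_def atLeast0LessThan)
  qed
  have H2: "H g = (b - g) ^ n" if "\<alpha> * b \<le> g" for g
    using that by (simp add: H_def n_def)
  have P1nn: "0 \<le> P1 g" if "g \<le> \<alpha> * b" for g
    unfolding P1_def using that a1 b by (intro sum_nonneg mult_nonneg_nonneg) auto
  have AE: "AE g in lborel. indicator {0..b} g * ennreal (H g)
          = indicator {0..\<alpha> * b} g * ennreal (P1 g) + indicator {\<alpha> * b..b} g * ennreal ((b - g) ^ n)"
    using AE_lborel_singleton[of "\<alpha> * b"]
  proof eventually_elim
    case (elim g)
    show ?case
    proof (cases "g < \<alpha> * b")
      case True
      then show ?thesis using elim H1 ab by (auto simp: indicator_def)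
    next
      case False
      then show ?thesis using elim H2 ab ab0 by (auto simp: indicator_def)
    qed
  qed
  have I1: "(\<integral>\<^sup>+ g. indicator {0..\<alpha> * b} g * ennreal (P1 g) \<partial>lborel)
      = ennreal (\<Sum>j<m'. real (n choose j) * ((1 - \<alpha>) * b) ^ (n - j) * ((\<alpha> * b) ^ Suc j / Suc j))"
  proof -
    have "((\<lambda>g. P1 g) has_integral (\<Sum>j<m'. real (n choose j) * ((1 - \<alpha>) * b) ^ (n - j) * ((\<alpha> * b - 0) ^ Suc j / Suc j))) {0..\<alpha> * b}"
      unfolding P1_def
      by (intro has_integral_sum has_integral_mult_right poly_has_integral ab0) auto
    then have "(\<integral>\<^sup>+ g. ennreal (P1 g) * indicator {0..\<alpha> * b} g \<partial>lborel)
      = ennreal (\<Sum>j<m'. real (n choose j) * ((1 - \<alpha>) * b) ^ (n - j) * ((\<alpha> * b - 0) ^ Suc j / Suc j))"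
      by (intro nn_integral_has_integral_lebesgue') (auto intro: P1nn)
    then show ?thesis by (simp add: mult.commute)
  qed
  have I2: "(\<integral>\<^sup>+ g. indicator {\<alpha> * b..b} g * ennreal ((b - g) ^ n) \<partial>lborel) = ennreal ((b - \<alpha> * b) ^ Suc n / Suc n)"
    by (rule poly_nn_integral[OF ab])
  have "(\<integral>\<^sup>+ g. indicator {0..b} g * ennreal (H g) \<partial>lborel)
     = (\<integral>\<^sup>+ g. indicator {0..\<alpha> * b} g * ennreal (P1 g) + indicator {\<alpha> * b..b} g * ennreal ((b - g) ^ n) \<partial>lborel)"
    by (rule nn_integral_cong_AE[OF AE])
  also have "\<dots> = (\<integral>\<^sup>+ g. indicator {0..\<alpha> * b} g * ennreal (P1 g) \<partial>lborel) + (\<integral>\<^sup>+ g. indicator {\<alpha> * b..b} g * ennreal ((b - g) ^ n) \<partial>lborel)"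
    unfolding P1_def by (intro nn_integral_add) auto
  also have "\<dots> = ennreal ((\<Sum>j<m'. real (n choose j) * ((1 - \<alpha>) * b) ^ (n - j) * ((\<alpha> * b) ^ Suc j / Suc j))
                  + (b - \<alpha> * b) ^ Suc n / Suc n)"
    unfolding I1 I2
    using a0 a1 b ab0 ab by (intro ennreal_plus[symmetric] sum_nonneg mult_nonneg_nonneg divide_nonneg_nonneg zero_le_power) auto
  finally have eq: "(\<integral>\<^sup>+ g. indicator {0..b} g * ennreal (H g) \<partial>lborel) = \<dots>" .
  have key: "real N * ((\<Sum>j<m'. real (n choose j) * ((1 - \<alpha>) * b) ^ (n - j) * ((\<alpha> * b) ^ Suc j / Suc j))
                  + (b - \<alpha> * b) ^ Suc n / Suc n) = b ^ N * fb N m \<alpha>"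
  proof -
    have s: "real N * (\<Sum>j<m'. real (n choose j) * ((1 - \<alpha>) * b) ^ (n - j) * ((\<alpha> * b) ^ Suc j / Suc j))
        = (\<Sum>j<m'. b ^ N * (real (N choose Suc j) * \<alpha> ^ Suc j * (1 - \<alpha>) ^ (N - Suc j)))"
      unfolding sum_distrib_left
    proof (rule sum.cong[OF refl])
      fix j assume "j \<in> {..<m'}"
      then have jn: "j < n" "j \<le> n" using m'n by auto
      have c: "real (Suc j) * real (N choose Suc j) = real N * real (n choose j)"
        using Suc_times_binomial[of j n] unfolding N by (metis of_nat_mult)
      have bN: "b ^ N = b ^ (n - j) * b ^ Suc j" using jn unfolding N by (simp add: power_add[symmetric])
      have nj: "N - Suc j = n - j" unfolding N by simp
      show "real N * (real (n choose j) * ((1 - \<alpha>) * b) ^ (n - j) * ((\<alpha> * b) ^ Suc j / real (Suc j)))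
           = b ^ N * (real (N choose Suc j) * \<alpha> ^ Suc j * (1 - \<alpha>) ^ (N - Suc j))"
        unfolding bN nj power_mult_distrib
        by (simp add: field_simps c[symmetric] del: of_nat_Suc)
    qed
    have t: "real N * ((b - \<alpha> * b) ^ Suc n / Suc n) = b ^ N * (real (N choose 0) * \<alpha> ^ 0 * (1 - \<alpha>) ^ (N - 0))"
    proof -
      have ee: "b - \<alpha> * b = (1 - \<alpha>) * b" by algebra
      have Npos: "real N \<noteq> 0" unfolding N by simp
      show ?thesis unfolding N[symmetric] ee power_mult_distrib using Npos by (simp add: mult.commute)
    qed
    have "b ^ N * fb N m \<alpha> = b ^ N * (real (N choose 0) * \<alpha> ^ 0 * (1 - \<alpha>) ^ (N - 0))
        + (\<Sum>j<m'. b ^ N * (real (N choose Suc j) * \<alpha> ^ Suc j * (1 - \<alpha>) ^ (N - Suc j)))"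
      unfolding fb_def mm sum.atLeast0_lessThan_Suc_shift
      by (simp add: sum_distrib_left atLeast0LessThan algebra_simps)
    then show ?thesis using s t by (simp add: distrib_left)
  qed
  show ?thesis unfolding eq key[symmetric] by (rule ennreal_mult'[symmetric]) simp
qed



lemma (in finite_borel_measure) cdf_le_measure:
  assumes atomless: "\<And>x. measure M {x} = 0"
  shows "measure M {r. cdf M r \<le> x} = max 0 (min x (measure M (space M)))"
proof -
  let ?b = "measure M (space M)"
  let ?S = "{r. cdf M r \<le> x}"
  have cont: "isCont (cdf M) r" for r using isCont_cdf atomless by simp
  have mono: "mono (cdf M)" by (simp add: cdf_nondecreasing monoI)
  show ?thesis
  proof (cases "?S = {}")
    case True
    have "x \<le> 0"
    proof (rule ccontr)
      assume "\<not> x \<le> 0"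
      then have "eventually (\<lambda>r. cdf M r < x) at_bot"
        using cdf_lim_at_bot order_tendstoD(2) by fastforce
      then obtain r where "cdf M r < x" by (auto simp: eventually_at_bot_linorder)
      then have "r \<in> ?S" by simp
      with True show False by blast
    qed
    with True show ?thesis using cdf_nonneg[of 0] cdf_bounded[of 0] by (auto simp: max_def min_def)
  next
    case False
    show ?thesis
    proof (cases "x < ?b")
      case xb: True
      have "eventually (\<lambda>r. x < cdf M r) at_top"
        using cdf_lim_at_top order_tendstoD(1) xb by fastforce
      then obtain r2 where r2: "\<And>r. r \<ge> r2 \<Longrightarrow> x < cdf M r" by (auto simp: eventually_at_top_linorder)
      have bdd: "bdd_above ?S"
      proof
        fix r assume "r \<in> ?S"
        then show "r \<le> r2" using r2[of r] by (cases "r \<le> r2") auto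
      qed
      have closed: "closed ?S"
        by (rule closed_Collect_le) (auto intro!: continuous_at_imp_continuous_on cont)
      let ?r = "Sup ?S"
      have rin: "?r \<in> ?S" using closed_contains_Sup[OF False bdd closed] .
      have Seq: "?S = {..?r}"
      proof
        show "?S \<subseteq> {..?r}" using cSup_upper[OF _ bdd] by auto
        show "{..?r} \<subseteq> ?S" using rin cdf_nondecreasing by (auto intro: order_trans)
      qed
      have "cdf M ?r = x"
      proof -
        have "?r \<le> r2"
        proof (rule ccontr)
          assume "\<not> ?r \<le> r2"
          then have "x < cdf M ?r" using r2 by simp
          with rin show False by simp
        qed
        have "cdf M ?r \<le> x" using rin by simp
        moreover have "x \<le> cdf M r2" using r2[of r2] by simp
        ultimately obtain r' where r': "?r \<le> r'" "r' \<le> r2" "cdf M r' = x"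
          using IVT[of "cdf M" ?r x r2] cont \<open>?r \<le> r2\<close> by auto
        then have "r' \<in> ?S" by simp
        then have "r' \<le> ?r" using cSup_upper[OF _ bdd] by auto
        with r' show ?thesis by simp
      qed
      moreover have "x \<ge> 0" using rin cdf_nonneg[of ?r] \<open>cdf M ?r = x\<close> by simp
      ultimately show ?thesis using Seq xb by (simp add: cdf_def)
    next
      case xb: False
      have "?S = UNIV" using xb by (auto intro: order_trans[OF cdf_bounded] simp: not_less)
      then show ?thesis using xb borel_UNIV by (auto simp: max_def min_def)
    qed
  qed
qed



lemma (in finite_borel_measure) distr_cdf_uniform:
  assumes atomless: "\<And>x. measure M {x} = 0"
  shows "distr M borel (cdf M) = density lborel (indicator {0..measure M (space M)})"
proof (rule measure_eqI_lessThan)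
  let ?b = "measure M (space M)"
  have mc[measurable]: "cdf M \<in> borel_measurable borel"
    by (rule borel_measurable_mono) (simp add: cdf_nondecreasing monoI)
  have mcM[measurable]: "cdf M \<in> borel_measurable M"
    using mc by (simp add: measurable_cong_sets[OF M_is_borel refl])
  show "sets (distr M borel (cdf M)) = sets borel" by simp
  show "sets (density lborel (indicator {0..?b})) = sets borel" by simp
  show "emeasure (distr M borel (cdf M)) {x<..} < \<infinity>" for x
  proof -
    have "emeasure (distr M borel (cdf M)) {x<..} = emeasure M (cdf M -` {x<..} \<inter> space M)"
      by (rule emeasure_distr) auto
    also have "\<dots> < \<infinity>" unfolding infinity_ennreal_def by (rule emeasure_finite[unfolded less_top])
    finally show ?thesis .
  qed
  fix x :: real
  have b0: "0 \<le> ?b" by simp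
  have Seq: "{r. cdf M r \<le> x} = {r\<in>space M. cdf M r \<le> x}" using borel_UNIV by auto
  have Ss: "{r. cdf M r \<le> x} \<in> sets M" unfolding Seq by measurable
  have "emeasure (distr M borel (cdf M)) {x<..} = emeasure M (cdf M -` {x<..} \<inter> space M)"
    by (rule emeasure_distr) auto
  also have "cdf M -` {x<..} \<inter> space M = space M - {r. cdf M r \<le> x}" using borel_UNIV by auto
  also have "emeasure M (space M - {r. cdf M r \<le> x}) = ennreal (measure M (space M - {r. cdf M r \<le> x}))"
    by (rule emeasure_eq_measure)
  also have "measure M (space M - {r. cdf M r \<le> x}) = ?b - measure M {r. cdf M r \<le> x}"
    by (rule finite_measure_compl[OF Ss])
  also have "measure M {r. cdf M r \<le> x} = max 0 (min x ?b)" by (rule cdf_le_measure[OF atomless])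
  also have "ennreal (?b - max 0 (min x ?b)) = emeasure (density lborel (indicator {0..?b})) {x<..}"
  proof -
    have "emeasure (density lborel (indicator {0..?b})) {x<..} = emeasure lborel ({0..?b} \<inter> {x<..})"
      by (rule emeasure_restricted) auto
    also have "\<dots> = ennreal (?b - max 0 (min x ?b))"
    proof (cases "x < 0")
      case True
      then have "{0..?b} \<inter> {x<..} = {0..?b}" by auto
      then show ?thesis using True b0 by simp
    next
      case False
      show ?thesis
      proof (cases "x < ?b")
        case True
        then have "{0..?b} \<inter> {x<..} = {x<..?b}" using False by auto
        then show ?thesis using True False by simp
      next
        case False2: False
        then have "{0..?b} \<inter> {x<..} = {}" by auto
        then show ?thesis using False False2 by (simp add: max_def min_def)
      qed
    qed
    finally show ?thesis by simp
  qed
  finally show "emeasure (distr M borel (cdf M)) {x<..} = emeasure (density lborel (indicator {0..?b})) {x<..}" .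
qed

lemma transfer_uniform:
  fixes \<nu> :: "'b measure" and s :: "'b \<Rightarrow> real" and \<phi> :: "real \<Rightarrow> ennreal"
  assumes fm: "finite_measure \<nu>" and B: "B \<in> sets \<nu>" and sm[measurable]: "s \<in> borel_measurable \<nu>"
    and atomless: "\<And>t. emeasure \<nu> {y\<in>space \<nu>. s y = t} = 0"
    and phim[measurable]: "\<phi> \<in> borel_measurable borel"
  shows "(\<integral>\<^sup>+ a. indicator B a * \<phi> (measure \<nu> {y\<in>space \<nu>. y \<in> B \<and> s y \<le> s a}) \<partial>\<nu>)
       = (\<integral>\<^sup>+ g. indicator {0..measure \<nu> B} g * \<phi> g \<partial>lborel)"
proof -
  interpret finite_measure \<nu> by fact
  have [measurable]: "B \<in> sets \<nu>" by fact
  define \<mu> where "\<mu> = distr (density \<nu> (indicator B)) borel s"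
  have sD: "sets (density \<nu> (indicator B)) = sets \<nu>" by simp
  have smD[measurable]: "s \<in> borel_measurable (density \<nu> (indicator B))"
    using sm by (simp add: measurable_cong_sets[OF sD refl])
  have emu: "emeasure \<mu> A = emeasure \<nu> ({y\<in>space \<nu>. s y \<in> A} \<inter> B)" if A: "A \<in> sets borel" for A
  proof -
    have "emeasure \<mu> A = emeasure (density \<nu> (indicator B)) (s -` A \<inter> space (density \<nu> (indicator B)))"
      unfolding \<mu>_def using A by (rule emeasure_distr[OF smD])
    also have "\<dots> = emeasure \<nu> (B \<inter> (s -` A \<inter> space \<nu>))"
    proof -
      have sp: "space (density \<nu> (indicator B)) = space \<nu>" by simp
      have "s -` A \<inter> space \<nu> \<in> sets \<nu>" using measurable_sets[OF sm A] .
      then show ?thesis unfolding sp by (rule emeasure_restricted[OF B])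
    qed
    also have "B \<inter> (s -` A \<inter> space \<nu>) = {y\<in>space \<nu>. s y \<in> A} \<inter> B" by auto
    finally show ?thesis .
  qed
  have fbm: "finite_borel_measure \<mu>"
    unfolding finite_borel_measure_def finite_borel_measure_axioms_def
  proof
    have "emeasure \<mu> (space \<mu>) = emeasure \<nu> ({y\<in>space \<nu>. s y \<in> UNIV} \<inter> B)"
      using emu[of UNIV] by (simp add: \<mu>_def)
    then show "finite_measure \<mu>" by (intro finite_measureI) (simp add: emeasure_eq_measure)
    show "sets \<mu> = sets borel" by (simp add: \<mu>_def)
  qed
  interpret mu: finite_borel_measure \<mu> by fact
  have cdfm[measurable]: "cdf \<mu> \<in> borel_measurable borel"
    by (rule borel_measurable_mono) (simp add: mu.cdf_nondecreasing monoI)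
  have cdfmu[measurable]: "cdf \<mu> \<in> borel_measurable \<mu>"
    using cdfm by (simp add: measurable_cong_sets[OF mu.M_is_borel refl])
  have mmu: "measure \<mu> A = measure \<nu> ({y\<in>space \<nu>. s y \<in> A} \<inter> B)" if "A \<in> sets borel" for A
    using emu[OF that] by (simp add: measure_def)
  have al: "measure \<mu> {x} = 0" for x
  proof -
    have "measure \<nu> ({y\<in>space \<nu>. s y \<in> {x}} \<inter> B) \<le> measure \<nu> {y\<in>space \<nu>. s y = x}"
      by (rule finite_measure_mono) auto
    also have "\<dots> = 0" using atomless[of x] by (simp add: measure_def)
    finally show ?thesis using mmu[of "{x}"] by (simp add: measure_nonneg antisym)
  qed
  have spmu: "measure \<mu> (space \<mu>) = measure \<nu> B"
    using mmu[of UNIV] mu.borel_UNIV by (simp add: Int_absorb1 sets.sets_into_space)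
  have G: "measure \<nu> {y\<in>space \<nu>. y \<in> B \<and> s y \<le> t} = cdf \<mu> t" for t
  proof -
    have "{y\<in>space \<nu>. s y \<in> {..t}} \<inter> B = {y\<in>space \<nu>. y \<in> B \<and> s y \<le> t}" by auto
    then show ?thesis unfolding cdf_def using mmu[of "{..t}"] by simp
  qed
  have D1: "integral\<^sup>N (distr (density \<nu> (indicator B)) borel s) (\<lambda>r. \<phi> (cdf \<mu> r))
      = (\<integral>\<^sup>+ a. \<phi> (cdf \<mu> (s a)) \<partial>density \<nu> (indicator B))"
    by (rule nn_integral_distr) auto
  have D2: "integral\<^sup>N (distr \<mu> borel (cdf \<mu>)) \<phi> = (\<integral>\<^sup>+ r. \<phi> (cdf \<mu> r) \<partial>\<mu>)"
    by (rule nn_integral_distr) auto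
  have "(\<integral>\<^sup>+ a. indicator B a * \<phi> (measure \<nu> {y\<in>space \<nu>. y \<in> B \<and> s y \<le> s a}) \<partial>\<nu>)
      = (\<integral>\<^sup>+ a. indicator B a * \<phi> (cdf \<mu> (s a)) \<partial>\<nu>)" by (simp add: G)
  also have "\<dots> = (\<integral>\<^sup>+ a. \<phi> (cdf \<mu> (s a)) \<partial>density \<nu> (indicator B))"
    by (subst nn_integral_density) auto
  also have "\<dots> = (\<integral>\<^sup>+ r. \<phi> (cdf \<mu> r) \<partial>\<mu>)"
    using D1 unfolding \<mu>_def[symmetric] by simp
  also have "\<dots> = (\<integral>\<^sup>+ g. \<phi> g \<partial>distr \<mu> borel (cdf \<mu>))"
    using D2 by simp
  also have "\<dots> = (\<integral>\<^sup>+ g. \<phi> g \<partial>density lborel (indicator {0..measure \<nu> B}))"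
    using mu.distr_cdf_uniform[OF al] spmu by simp
  also have "\<dots> = (\<integral>\<^sup>+ g. indicator {0..measure \<nu> B} g * \<phi> g \<partial>lborel)"
    by (subst nn_integral_density) auto
  finally show ?thesis .
qed



definition RR :: "'b measure \<Rightarrow> (nat \<Rightarrow> 'b \<Rightarrow> real) \<Rightarrow> nat set \<Rightarrow> nat set \<Rightarrow> (nat \<Rightarrow> 'b) \<Rightarrow> 'b set" where
  "RR \<nu> s K I x = {y \<in> space \<nu>. \<exists>k\<in>K. \<forall>i\<in>I. s k y \<le> s k (x i)}"

definition EE :: "'b measure \<Rightarrow> (nat \<Rightarrow> 'b \<Rightarrow> real) \<Rightarrow> nat set \<Rightarrow> nat set \<Rightarrow> 'b set \<Rightarrow> real \<Rightarrow> (nat \<Rightarrow> 'b) set" where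
  "EE \<nu> s K I B \<alpha> = {x \<in> space (PiM I (\<lambda>_. \<nu>)). (\<forall>i\<in>I. x i \<in> B) \<and> \<alpha> * measure \<nu> B < measure \<nu> (RR \<nu> s K I x \<inter> B)}"

lemma RR_sets:
  assumes [measurable]: "\<And>k. s k \<in> borel_measurable \<nu>" and "finite K" "finite I"
  shows "RR \<nu> s K I x \<in> sets \<nu>"
  unfolding RR_def using assms(2,3) by measurable

lemma RR_measure_measurable:
  fixes \<nu> :: "'b measure"
  assumes fm: "finite_measure \<nu>" and sm[measurable]: "\<And>k. s k \<in> borel_measurable \<nu>"
    and fK: "finite K" and fI: "finite I" and B[measurable]: "B \<in> sets \<nu>"
  shows "(\<lambda>x. measure \<nu> (RR \<nu> s K I x \<inter> B)) \<in> borel_measurable (PiM I (\<lambda>_. \<nu>))"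
proof -
  interpret finite_measure \<nu> by fact
  define Q where "Q = {p \<in> space (PiM I (\<lambda>_. \<nu>) \<Otimes>\<^sub>M \<nu>). snd p \<in> B \<and> (\<exists>k\<in>K. \<forall>i\<in>I. s k (snd p) \<le> s k (fst p i))}"
  have Q: "Q \<in> sets (PiM I (\<lambda>_. \<nu>) \<Otimes>\<^sub>M \<nu>)"
    unfolding Q_def using fK fI by measurable
  have "(\<lambda>x. emeasure \<nu> (Pair x -` Q)) \<in> borel_measurable (PiM I (\<lambda>_. \<nu>))"
    by (rule measurable_emeasure_Pair[OF Q])
  then have m: "(\<lambda>x. enn2real (emeasure \<nu> (Pair x -` Q))) \<in> borel_measurable (PiM I (\<lambda>_. \<nu>))"
    by measurable
  show ?thesis
  proof (rule measurable_cong[THEN iffD1, OF _ m])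
    fix x assume x: "x \<in> space (PiM I (\<lambda>_. \<nu>))"
    have "Pair x -` Q = RR \<nu> s K I x \<inter> B"
      using x sets.sets_into_space[OF B] unfolding Q_def RR_def by (auto simp: space_pair_measure)
    then show "enn2real (emeasure \<nu> (Pair x -` Q)) = measure \<nu> (RR \<nu> s K I x \<inter> B)"
      by (simp add: measure_def)
  qed
qed

lemma EE_sets:
  assumes fm: "finite_measure \<nu>" and sm[measurable]: "\<And>k. s k \<in> borel_measurable \<nu>"
    and fK: "finite K" and fI: "finite I" and B[measurable]: "B \<in> sets \<nu>"
  shows "EE \<nu> s K I B \<alpha> \<in> sets (PiM I (\<lambda>_. \<nu>))"
proof -
  note [measurable] = RR_measure_measurable[OF fm sm fK fI B]
  show ?thesis unfolding EE_def using fI by measurable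
qed

lemma main_lemma:
  fixes \<nu> :: "'b measure" and s :: "nat \<Rightarrow> 'b \<Rightarrow> real"
  assumes fm: "finite_measure \<nu>"
    and sm[measurable]: "\<And>k. s k \<in> borel_measurable \<nu>"
    and fK: "finite K"
    and al: "\<And>k t. k \<in> K \<Longrightarrow> emeasure \<nu> {y\<in>space \<nu>. s k y = t} = 0"
  shows "finite I \<Longrightarrow> card K \<le> card I \<Longrightarrow> B \<in> sets \<nu> \<Longrightarrow> 0 \<le> \<alpha> \<Longrightarrow> \<alpha> \<le> 1 \<Longrightarrow>
     emeasure (PiM I (\<lambda>_. \<nu>)) (EE \<nu> s K I B \<alpha>) \<le> ennreal (measure \<nu> B ^ card I * fb (card I) (card K) \<alpha>)"
  using fK al
proof (induction K arbitrary: I B \<alpha> rule: finite_induct)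
  case empty
  have "EE \<nu> s {} I B \<alpha> = {}"
    unfolding EE_def RR_def using empty.prems by (auto simp: not_less)
  then show ?case by simp
next
  case (insert k0 K')
  interpret finite_measure \<nu> by fact
  note fI = insert.prems(1)
  note cardKI = insert.prems(2)
  note B[measurable] = insert.prems(3)
  note a0 = insert.prems(4)
  note a1 = insert.prems(5)
  have alK: "emeasure \<nu> {y\<in>space \<nu>. s k y = t} = 0" if "k \<in> insert k0 K'" for k t
    using insert.prems(6) that by blast
  have alK': "\<And>k t. k \<in> K' \<Longrightarrow> emeasure \<nu> {y\<in>space \<nu>. s k y = t} = 0" using alK by blast
  have psf: "product_sigma_finite (\<lambda>_. \<nu>)"
    unfolding product_sigma_finite_def by (simp add: sigma_finite_measure_axioms)
  interpret P: product_sigma_finite "\<lambda>_. \<nu>" by fact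
  define b where "b = measure \<nu> B"
  define N where "N = card I"
  define m where "m = card (insert k0 K')"
  have mK: "m = Suc (card K')" unfolding m_def using insert.hyps by simp
  have mN: "m \<le> N" using cardKI unfolding m_def N_def .
  have N1: "1 \<le> N" using mN mK by simp
  have Ine: "I \<noteq> {}" using N1 unfolding N_def by auto
  define G where "G = (\<lambda>c. measure \<nu> {y\<in>space \<nu>. y \<in> B \<and> s k0 y \<le> c})"
  define H where "H = (\<lambda>g. if g < \<alpha> * b then (b - g) ^ (N - 1) * fb (N - 1) (m - 1) ((\<alpha> * b - g) / (b - g))
                   else (b - g) ^ (N - 1))"
  have b0: "0 \<le> b" unfolding b_def by simp
  have ab: "\<alpha> * b \<le> b" using mult_left_le_one_le[OF b0 a0 a1] .
  define Ej where "Ej = (\<lambda>j. EE \<nu> s (insert k0 K') I B \<alpha> \<inter> {x \<in> space (PiM I (\<lambda>_. \<nu>)). \<forall>i\<in>I. s k0 (x j) \<le> s k0 (x i)})"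
  have EEs: "EE \<nu> s (insert k0 K') I B \<alpha> \<in> sets (PiM I (\<lambda>_. \<nu>))"
    by (rule EE_sets[OF fm sm _ fI B]) (use insert.hyps in simp)
  have Ej_sets: "Ej j \<in> sets (PiM I (\<lambda>_. \<nu>))" if j: "j \<in> I" for j
  proof -
    have cm: "(\<lambda>x. s k0 (x i)) \<in> borel_measurable (PiM I (\<lambda>_. \<nu>))" if "i \<in> I" for i
      by (rule measurable_compose[OF measurable_component_singleton[OF that] sm])
    have eq: "{x \<in> space (PiM I (\<lambda>_. \<nu>)). \<forall>i\<in>I. s k0 (x j) \<le> s k0 (x i)}
        = (\<Inter>i\<in>I. {x \<in> space (PiM I (\<lambda>_. \<nu>)). s k0 (x j) \<le> s k0 (x i)})" using j by auto
    have "{x \<in> space (PiM I (\<lambda>_. \<nu>)). \<forall>i\<in>I. s k0 (x j) \<le> s k0 (x i)} \<in> sets (PiM I (\<lambda>_. \<nu>))"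
      unfolding eq using fI j by (intro sets.finite_INT borel_measurable_le cm) auto
    then show ?thesis unfolding Ej_def using EEs by blast
  qed
  have cover: "EE \<nu> s (insert k0 K') I B \<alpha> \<subseteq> (\<Union>j\<in>I. Ej j)"
  proof
    fix x assume x: "x \<in> EE \<nu> s (insert k0 K') I B \<alpha>"
    define v where "v = Min ((\<lambda>i. s k0 (x i)) ` I)"
    have "v \<in> (\<lambda>i. s k0 (x i)) ` I" unfolding v_def using fI Ine by (intro Min_in) auto
    then obtain j where j: "j \<in> I" "s k0 (x j) = v" by auto
    have "\<forall>i\<in>I. s k0 (x j) \<le> s k0 (x i)" using j fI unfolding v_def by auto
    then show "x \<in> (\<Union>j\<in>I. Ej j)" using x j unfolding Ej_def EE_def by auto
  qed
  have Gle: "0 \<le> G c \<and> G c \<le> b" for c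
    unfolding G_def b_def by (auto intro!: finite_measure_mono)
  have step: "emeasure (PiM I (\<lambda>_. \<nu>)) (Ej j) \<le> (\<integral>\<^sup>+ a. indicator B a * ennreal (H (G (s k0 a))) \<partial>\<nu>)"
    if j: "j \<in> I" for j
  proof -
    define J where "J = I - {j}"
    have IJ: "I = insert j J" and jJ: "j \<notin> J" and fJ: "finite J" using j fI unfolding J_def by auto
    have cJ: "card J = N - 1" unfolding N_def J_def using j fI by (simp add: card_Diff_singleton)
    have [measurable]: "Ej j \<in> sets (PiM (insert j J) (\<lambda>_. \<nu>))" using Ej_sets[OF j] IJ by simp
    have "emeasure (PiM I (\<lambda>_. \<nu>)) (Ej j) = (\<integral>\<^sup>+ x. indicator (Ej j) x \<partial>PiM (insert j J) (\<lambda>_. \<nu>))"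
      using IJ Ej_sets[OF j] by simp
    also have "\<dots> = (\<integral>\<^sup>+ a. (\<integral>\<^sup>+ x'. indicator (Ej j) (x'(j := a)) \<partial>PiM J (\<lambda>_. \<nu>)) \<partial>\<nu>)"
      by (rule P.product_nn_integral_insert_rev[OF fJ jJ]) measurable
    also have "\<dots> \<le> (\<integral>\<^sup>+ a. indicator B a * ennreal (H (G (s k0 a))) \<partial>\<nu>)"
    proof (rule nn_integral_mono)
      fix a assume a: "a \<in> space \<nu>"
      show "(\<integral>\<^sup>+ x'. indicator (Ej j) (x'(j := a)) \<partial>PiM J (\<lambda>_. \<nu>)) \<le> indicator B a * ennreal (H (G (s k0 a)))"
      proof (cases "a \<in> B")
        case False
        have "indicator (Ej j) (x'(j := a)) = (0::ennreal)" for x'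
          using False j unfolding Ej_def EE_def by (auto simp: indicator_def)
        then show ?thesis by simp
      next
        case aB: True
        define c where "c = s k0 a"
        define B2 where "B2 = {y \<in> space \<nu>. y \<in> B \<and> c \<le> s k0 y}"
        have B2s[measurable]: "B2 \<in> sets \<nu>" unfolding B2_def by measurable
        have mB2: "measure \<nu> B2 = b - G c"
        proof -
          have d1: "{y\<in>space \<nu>. y \<in> B \<and> s k0 y \<le> c} = {y\<in>space \<nu>. y \<in> B \<and> s k0 y < c} \<union> {y\<in>space \<nu>. y \<in> B \<and> s k0 y = c}"
            by auto
          have z: "measure \<nu> {y\<in>space \<nu>. y \<in> B \<and> s k0 y = c} = 0"
          proof -
            have "measure \<nu> {y\<in>space \<nu>. y \<in> B \<and> s k0 y = c} \<le> measure \<nu> {y\<in>space \<nu>. s k0 y = c}"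
              by (rule finite_measure_mono) auto
            also have "\<dots> = 0" using alK[of k0 c] by (simp add: measure_def)
            finally show ?thesis by (simp add: antisym)
          qed
          have "G c \<le> measure \<nu> {y\<in>space \<nu>. y \<in> B \<and> s k0 y < c} + measure \<nu> {y\<in>space \<nu>. y \<in> B \<and> s k0 y = c}"
            unfolding G_def d1 by (rule measure_Un_le) auto
          moreover have "measure \<nu> {y\<in>space \<nu>. y \<in> B \<and> s k0 y < c} \<le> G c"
            unfolding G_def by (rule finite_measure_mono) auto
          ultimately have Gc: "G c = measure \<nu> {y\<in>space \<nu>. y \<in> B \<and> s k0 y < c}" using z by simp
          have d2: "B = B2 \<union> {y\<in>space \<nu>. y \<in> B \<and> s k0 y < c}"
            unfolding B2_def using sets.sets_into_space[OF B] by auto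
          have "b = measure \<nu> B2 + measure \<nu> {y\<in>space \<nu>. y \<in> B \<and> s k0 y < c}"
            unfolding b_def by (subst d2, rule finite_measure_Union) (auto simp: B2_def)
          then show ?thesis using Gc by simp
        qed
        have key: "(\<forall>i\<in>J. x' i \<in> B2) \<and> \<alpha> * b < G c + measure \<nu> (RR \<nu> s K' J x' \<inter> B2)"
          if x': "x' \<in> space (PiM J (\<lambda>_. \<nu>))" and xE: "x'(j := a) \<in> Ej j" for x'
        proof -
          let ?x = "x'(j := a)"
          have xi: "?x i = x' i" if "i \<in> J" for i using that jJ by auto
          have xEE: "?x \<in> EE \<nu> s (insert k0 K') I B \<alpha>" and xmin: "\<forall>i\<in>I. s k0 (?x j) \<le> s k0 (?x i)"
            using xE unfolding Ej_def by auto
          have inB: "\<forall>i\<in>I. ?x i \<in> B" and lt: "\<alpha> * b < measure \<nu> (RR \<nu> s (insert k0 K') I ?x \<inter> B)"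
            using xEE unfolding EE_def b_def by auto
          have p1: "\<forall>i\<in>J. x' i \<in> B2"
          proof
            fix i assume i: "i \<in> J"
            then have "x' i \<in> B" using inB xi IJ by fastforce
            moreover have "c \<le> s k0 (x' i)" using xmin i xi IJ unfolding c_def by fastforce
            ultimately show "x' i \<in> B2" unfolding B2_def using sets.sets_into_space[OF B] by auto
          qed
          have sub: "RR \<nu> s (insert k0 K') I ?x \<inter> B \<subseteq> {y\<in>space \<nu>. y \<in> B \<and> s k0 y \<le> c} \<union> (RR \<nu> s K' J x' \<inter> B2)"
          proof
            fix y assume y: "y \<in> RR \<nu> s (insert k0 K') I ?x \<inter> B"
            then obtain k where k: "k \<in> insert k0 K'" "\<forall>i\<in>I. s k y \<le> s k (?x i)" and ys: "y \<in> space \<nu>" "y \<in> B"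
              unfolding RR_def by auto
            show "y \<in> {y\<in>space \<nu>. y \<in> B \<and> s k0 y \<le> c} \<union> (RR \<nu> s K' J x' \<inter> B2)"
            proof (cases "s k0 y \<le> c")
              case True then show ?thesis using ys by auto
            next
              case False
              have "k \<noteq> k0" using k(2) j False unfolding c_def by auto
              then have "k \<in> K'" using k(1) by auto
              moreover have "\<forall>i\<in>J. s k y \<le> s k (x' i)" using k(2) xi IJ by auto
              ultimately show ?thesis using ys False unfolding RR_def B2_def by auto
            qed
          qed
          have RRs: "RR \<nu> s K' J x' \<in> sets \<nu>" by (rule RR_sets[OF sm insert.hyps(1) fJ])
          have "measure \<nu> (RR \<nu> s (insert k0 K') I ?x \<inter> B) \<le> measure \<nu> ({y\<in>space \<nu>. y \<in> B \<and> s k0 y \<le> c} \<union> (RR \<nu> s K' J x' \<inter> B2))"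
            by (rule finite_measure_mono[OF sub]) (use RRs in auto)
          also have "\<dots> \<le> G c + measure \<nu> (RR \<nu> s K' J x' \<inter> B2)"
            unfolding G_def by (rule measure_Un_le) (use RRs in auto)
          finally show ?thesis using p1 lt by simp
        qed
        show ?thesis
        proof (cases "G c < \<alpha> * b")
          case True
          define \<alpha>' where "\<alpha>' = (\<alpha> * b - G c) / (b - G c)"
          have bG: "0 < b - G c" using True ab by simp
          have a'0: "0 \<le> \<alpha>'" unfolding \<alpha>'_def using True bG by simp
          have a'1: "\<alpha>' \<le> 1" unfolding \<alpha>'_def using ab bG by simp
          have a'eq: "\<alpha>' * measure \<nu> B2 = \<alpha> * b - G c" unfolding \<alpha>'_def mB2 using bG by simp
          have "(\<integral>\<^sup>+ x'. indicator (Ej j) (x'(j := a)) \<partial>PiM J (\<lambda>_. \<nu>))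
              \<le> (\<integral>\<^sup>+ x'. indicator (EE \<nu> s K' J B2 \<alpha>') x' \<partial>PiM J (\<lambda>_. \<nu>))"
          proof (rule nn_integral_mono)
            fix x' assume x': "x' \<in> space (PiM J (\<lambda>_. \<nu>))"
            show "indicator (Ej j) (x'(j := a)) \<le> (indicator (EE \<nu> s K' J B2 \<alpha>') x' :: ennreal)"
            proof (cases "x'(j := a) \<in> Ej j")
              case True
              from key[OF x' True] have "x' \<in> EE \<nu> s K' J B2 \<alpha>'"
                unfolding EE_def using x' a'eq by auto
              then show ?thesis by (simp add: indicator_def)
            qed simp
          qed
          also have "\<dots> = emeasure (PiM J (\<lambda>_. \<nu>)) (EE \<nu> s K' J B2 \<alpha>')"
            using EE_sets[OF fm sm insert.hyps(1) fJ B2s] by simp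
          also have "\<dots> \<le> ennreal (measure \<nu> B2 ^ card J * fb (card J) (card K') \<alpha>')"
            using insert.IH[OF fJ _ B2s a'0 a'1 alK'] cardKI insert.hyps unfolding cJ N_def by simp
          also have "\<dots> = indicator B a * ennreal (H (G (s k0 a)))"
            using aB True unfolding H_def mB2 cJ \<alpha>'_def c_def mK by simp
          finally show ?thesis .
        next
          case False
          have "(\<integral>\<^sup>+ x'. indicator (Ej j) (x'(j := a)) \<partial>PiM J (\<lambda>_. \<nu>))
              \<le> (\<integral>\<^sup>+ x'. indicator (PiE J (\<lambda>_. B2)) x' \<partial>PiM J (\<lambda>_. \<nu>))"
          proof (rule nn_integral_mono)
            fix x' assume x': "x' \<in> space (PiM J (\<lambda>_. \<nu>))"
            show "indicator (Ej j) (x'(j := a)) \<le> (indicator (PiE J (\<lambda>_. B2)) x' :: ennreal)"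
            proof (cases "x'(j := a) \<in> Ej j")
              case True
              from key[OF x' True] have "x' \<in> PiE J (\<lambda>_. B2)"
                using x' by (auto simp: space_PiM PiE_iff)
              then show ?thesis by (simp add: indicator_def)
            qed simp
          qed
          also have "\<dots> = emeasure (PiM J (\<lambda>_. \<nu>)) (PiE J (\<lambda>_. B2))"
            using sets_PiM_I_finite[OF fJ, of "\<lambda>_. B2" "\<lambda>_. \<nu>"] B2s by simp
          also have "\<dots> = (\<Prod>i\<in>J. emeasure \<nu> B2)"
            by (rule P.emeasure_PiM[OF fJ]) simp
          also have "\<dots> = ennreal (measure \<nu> B2 ^ card J)"
            by (simp add: emeasure_eq_measure prod_ennreal ennreal_power)
          also have "\<dots> = indicator B a * ennreal (H (G (s k0 a)))"
            using aB False unfolding H_def mB2 cJ c_def by simp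
          finally show ?thesis .
        qed
      qed
    qed
    finally show ?thesis .
  qed
  have Hm[measurable]: "H \<in> borel_measurable borel" unfolding H_def fb_def by measurable
  have unif: "(\<integral>\<^sup>+ a. indicator B a * ennreal (H (G (s k0 a))) \<partial>\<nu>) = (\<integral>\<^sup>+ g. indicator {0..b} g * ennreal (H g) \<partial>lborel)"
    unfolding G_def b_def
    by (rule transfer_uniform[OF fm B sm, where \<phi>="\<lambda>g. ennreal (H g)"]) (auto intro: alK simp: b_def[symmetric])
  have "emeasure (PiM I (\<lambda>_. \<nu>)) (EE \<nu> s (insert k0 K') I B \<alpha>) \<le> emeasure (PiM I (\<lambda>_. \<nu>)) (\<Union>j\<in>I. Ej j)"
    by (rule emeasure_mono[OF cover]) (use Ej_sets fI in auto)
  also have "\<dots> \<le> (\<Sum>j\<in>I. emeasure (PiM I (\<lambda>_. \<nu>)) (Ej j))"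
    by (rule emeasure_subadditive_finite[OF fI]) (use Ej_sets in auto)
  also have "\<dots> \<le> (\<Sum>j\<in>I. (\<integral>\<^sup>+ g. indicator {0..b} g * ennreal (H g) \<partial>lborel))"
    by (rule sum_mono) (use step unif in auto)
  also have "\<dots> = ennreal (real N) * (\<integral>\<^sup>+ g. indicator {0..b} g * ennreal (H g) \<partial>lborel)"
    by (simp add: N_def ennreal_of_nat_eq_real_of_nat)
  also have "\<dots> = ennreal (b ^ N * fb N m \<alpha>)"
    unfolding H_def by (rule calc_main[OF b0 a0 a1 _ mN]) (simp add: mK)
  finally show ?case unfolding b_def N_def m_def .
qed

lemma measure_pred_measurable:
  fixes \<nu> :: "'b measure" and N :: "'c measure"
  assumes fm: "finite_measure \<nu>" and pr: "Measurable.pred (N \<Otimes>\<^sub>M \<nu>) (\<lambda>p. P (fst p) (snd p))"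
  shows "(\<lambda>x. measure \<nu> {y\<in>space \<nu>. P x y}) \<in> borel_measurable N"
proof -
  interpret finite_measure \<nu> by fact
  define Q where "Q = {p \<in> space (N \<Otimes>\<^sub>M \<nu>). P (fst p) (snd p)}"
  have Q: "Q \<in> sets (N \<Otimes>\<^sub>M \<nu>)" unfolding Q_def using pr by measurable
  have "(\<lambda>x. emeasure \<nu> (Pair x -` Q)) \<in> borel_measurable N"
    by (rule measurable_emeasure_Pair[OF Q])
  then have m: "(\<lambda>x. enn2real (emeasure \<nu> (Pair x -` Q))) \<in> borel_measurable N"
    by measurable
  show ?thesis
  proof (rule measurable_cong[THEN iffD1, OF _ m])
    fix x assume x: "x \<in> space N"
    have "Pair x -` Q = {y\<in>space \<nu>. P x y}"
      using x unfolding Q_def by (auto simp: space_pair_measure)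
    then show "enn2real (emeasure \<nu> (Pair x -` Q)) = measure \<nu> {y\<in>space \<nu>. P x y}"
      by (simp add: measure_def)
  qed
qed

theorem corollaryA3:
  fixes M :: "'a measure" and le :: "nat \<Rightarrow> 'a \<Rightarrow> 'a \<Rightarrow> bool"
    and m N :: nat and \<alpha> :: real and \<tau> :: "nat \<Rightarrow> 'a \<Rightarrow> real"
  assumes "prob_space M"
    and refl: "\<And>k x. k \<in> {1..m} \<Longrightarrow> x \<in> space M \<Longrightarrow> le k x x"
    and trans: "\<And>k x y z. k \<in> {1..m} \<Longrightarrow> x \<in> space M \<Longrightarrow> y \<in> space M \<Longrightarrow> z \<in> space M
                 \<Longrightarrow> le k x y \<Longrightarrow> le k y z \<Longrightarrow> le k x z"
    and total: "\<And>k x y. k \<in> {1..m} \<Longrightarrow> x \<in> space M \<Longrightarrow> y \<in> space M \<Longrightarrow> le k x y \<or> le k y x"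
    and meas_eq: "\<And>k x. k \<in> {1..m} \<Longrightarrow> x \<in> space M
                   \<Longrightarrow> {y \<in> space M. le k y x \<and> le k x y} \<in> sets M"
    and meas_le: "\<And>k x. k \<in> {1..m} \<Longrightarrow> x \<in> space M \<Longrightarrow> {y \<in> space M. le k y x} \<in> sets M"
    and "N \<ge> m"
    and "0 \<le> \<alpha>" and "\<alpha> \<le> 1"
    and tau_rv: "\<And>k. k \<in> {1..m} \<Longrightarrow> \<tau> k \<in> borel_measurable M"
    and tau_ord: "\<And>k x y. k \<in> {1..m} \<Longrightarrow> x \<in> space M \<Longrightarrow> y \<in> space M
                   \<Longrightarrow> \<tau> k x \<le> \<tau> k y \<Longrightarrow> le k x y"
  shows "outer_measure_of (completion (PiM {..<N} (\<lambda>_. M)))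
           {xs \<in> space (PiM {..<N} (\<lambda>_. M)). depthD M le m N xs < 1 - \<alpha>}
         \<le> ennreal (\<Sum>k = 0..<m. real (N choose k) * \<alpha> ^ k * (1 - \<alpha>) ^ (N - k))"
proof -
  note pM = assms(1)
  note mN = assms(7)
  note a0 = assms(8)
  note a1 = assms(9)
  interpret M: prob_space M by fact
  define U where "U = uniform_measure lborel {0..1::real}"
  have pU: "prob_space U" unfolding U_def by (intro prob_space_uniform_measure) auto
  interpret U: prob_space U by fact
  have sU: "sets U = sets borel" "space U = UNIV" unfolding U_def by auto
  define \<nu> where "\<nu> = M \<Otimes>\<^sub>M U"
  have p\<nu>: "prob_space \<nu>" unfolding \<nu>_def by (rule prob_space_pair[OF pM pU])
  interpret nu: prob_space \<nu> by fact
  have fm\<nu>: "finite_measure \<nu>" by (rule nu.finite_measure_axioms)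
  define \<tau>' where "\<tau>' = (\<lambda>k. if k \<in> {1..m} then \<tau> k else (\<lambda>_. 0))"
  have tm[measurable]: "\<tau>' k \<in> borel_measurable M" for k
    unfolding \<tau>'_def using tau_rv by auto
  have tt: "k \<in> {1..m} \<Longrightarrow> \<tau>' k = \<tau> k" for k unfolding \<tau>'_def by simp
  define Fl where "Fl = (\<lambda>k t. measure M {y\<in>space M. \<tau>' k y < t})"
  define Fe where "Fe = (\<lambda>k t. measure M {y\<in>space M. \<tau>' k y \<le> t})"
  define clamp where "clamp = (\<lambda>u::real. max 0 (min 1 u))"
  have Flmono: "Fl k t \<le> Fl k t'" if "t \<le> t'" for k t t'
    unfolding Fl_def using that by (intro M.finite_measure_mono) auto
  have Femono: "Fe k t \<le> Fe k t'" if "t \<le> t'" for k t t'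
    unfolding Fe_def using that by (intro M.finite_measure_mono) auto
  have FeFl: "Fe k t \<le> Fl k t'" if "t < t'" for k t t'
    unfolding Fe_def Fl_def using that by (intro M.finite_measure_mono) auto
  have FlFe: "Fl k t \<le> Fe k t" for k t
    unfolding Fe_def Fl_def by (intro M.finite_measure_mono) auto
  have Feq: "Fe k t - Fl k t = measure M {y\<in>space M. \<tau>' k y = t}" for k t
  proof -
    have "{y\<in>space M. \<tau>' k y \<le> t} = {y\<in>space M. \<tau>' k y < t} \<union> {y\<in>space M. \<tau>' k y = t}" by auto
    moreover have s1: "{y\<in>space M. \<tau>' k y < t} \<in> sets M" by measurable
    moreover have s2: "{y\<in>space M. \<tau>' k y = t} \<in> sets M" by measurable
    ultimately have "Fe k t = Fl k t + measure M {y\<in>space M. \<tau>' k y = t}"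
      unfolding Fe_def Fl_def using M.finite_measure_Union[OF s1 s2] by auto
    then show ?thesis by simp
  qed
  have Flm[measurable]: "Fl k \<in> borel_measurable borel" for k
    by (rule borel_measurable_mono) (simp add: Flmono monoI)
  have Fem[measurable]: "Fe k \<in> borel_measurable borel" for k
    by (rule borel_measurable_mono) (simp add: Femono monoI)
  have clm[measurable]: "clamp \<in> borel_measurable borel" unfolding clamp_def by measurable
  have cl01: "0 \<le> clamp u" "clamp u \<le> 1" for u unfolding clamp_def by auto
  define s where "s = (\<lambda>k (p :: 'a \<times> real). if k \<in> {1..m} then
      Fl k (\<tau>' k (fst p)) + arctan (\<tau>' k (fst p)) + clamp (snd p) * (Fe k (\<tau>' k (fst p)) - Fl k (\<tau>' k (fst p))) else 0)"
  have clU[measurable]: "clamp \<in> borel_measurable U"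
    using clm by (simp add: measurable_cong_sets[OF sU(1) HOL.refl])
  have sm[measurable]: "s k \<in> borel_measurable \<nu>" for k
  proof (cases "k \<in> {1..m}")
    case True
    then have eq: "s k = (\<lambda>p. Fl k (\<tau>' k (fst p)) + arctan (\<tau>' k (fst p)) + clamp (snd p) * (Fe k (\<tau>' k (fst p)) - Fl k (\<tau>' k (fst p))))"
      unfolding s_def by auto
    show ?thesis unfolding eq \<nu>_def by measurable
  next
    case False
    then have eq: "s k = (\<lambda>p. 0)" unfolding s_def by auto
    show ?thesis unfolding eq by simp
  qed
  have smono: "s k (y, u) \<le> s k (y', u')" if k: "k \<in> {1..m}" and lt: "\<tau>' k y < \<tau>' k y'" for k y u y' u'
  proof -
    let ?r = "\<tau>' k y" and ?r' = "\<tau>' k y'"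
    have d0: "0 \<le> Fe k ?r - Fl k ?r" using FlFe by simp
    have "clamp u * (Fe k ?r - Fl k ?r) \<le> Fe k ?r - Fl k ?r"
      using cl01 d0 by (simp add: mult_left_le_one_le)
    moreover have "0 \<le> clamp u' * (Fe k ?r' - Fl k ?r')" using cl01 FlFe by simp
    moreover have "Fe k ?r \<le> Fl k ?r'" using FeFl lt by simp
    moreover have "arctan ?r < arctan ?r'" using lt by (simp add: arctan_less_iff)
    ultimately show ?thesis using k unfolding s_def by simp
  qed
  have atomless: "emeasure \<nu> {p\<in>space \<nu>. s k p = t} = 0" if k: "k \<in> {1..m}" for k t
  proof -
    define Z where "Z = {p\<in>space \<nu>. s k p = t}"
    have Zs: "Z \<in> sets (M \<Otimes>\<^sub>M U)" unfolding Z_def \<nu>_def[symmetric] by measurable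
    define C where "C = {y\<in>space M. Fl k (\<tau>' k y) + arctan (\<tau>' k y) = t \<and> Fe k (\<tau>' k y) - Fl k (\<tau>' k y) = 0}"
    have Cs: "C \<in> sets M" unfolding C_def by measurable
    have "emeasure \<nu> Z = (\<integral>\<^sup>+ y. emeasure U (Pair y -` Z) \<partial>M)"
      unfolding \<nu>_def by (rule U.emeasure_pair_measure_alt[OF Zs])
    also have "\<dots> \<le> (\<integral>\<^sup>+ y. indicator C y \<partial>M)"
    proof (rule nn_integral_mono)
      fix y assume y: "y \<in> space M"
      define \<Phi> where "\<Phi> = Fl k (\<tau>' k y) + arctan (\<tau>' k y)"
      define A where "A = Fe k (\<tau>' k y) - Fl k (\<tau>' k y)"
      have A0: "0 \<le> A" unfolding A_def using FlFe by simp
      have PZ: "Pair y -` Z = {u. \<Phi> + clamp u * A = t}"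
        using y k unfolding Z_def s_def \<Phi>_def A_def \<nu>_def by (auto simp: space_pair_measure sU)
      show "emeasure U (Pair y -` Z) \<le> indicator C y"
      proof (cases "A = 0")
        case True
        show ?thesis
        proof (cases "y \<in> C")
          case True
          then show ?thesis using U.emeasure_le_1 by simp
        next
          case False
          then have "\<Phi> \<noteq> t" using y \<open>A = 0\<close> unfolding C_def \<Phi>_def A_def by auto
          then have "Pair y -` Z = {}" unfolding PZ using \<open>A = 0\<close> by auto
          then show ?thesis by simp
        qed
      next
        case False
        then have Apos: "0 < A" using A0 by simp
        have Xs: "{u. \<Phi> + clamp u * A = t} \<in> sets borel" by measurable
        have sub: "{0..1} \<inter> {u. \<Phi> + clamp u * A = t} \<subseteq> {(t - \<Phi>) / A}"
          using Apos by (auto simp: clamp_def field_simps)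
        have "emeasure lborel ({0..1} \<inter> {u. \<Phi> + clamp u * A = t}) \<le> emeasure lborel {(t - \<Phi>) / A}"
          by (rule emeasure_mono[OF sub]) simp
        then have z: "emeasure lborel ({0..1} \<inter> {u. \<Phi> + clamp u * A = t}) = 0" by simp
        have "emeasure U (Pair y -` Z) = 0"
          unfolding PZ U_def using Xs z by simp
        then show ?thesis by simp
      qed
    qed
    also have "\<dots> = emeasure M C" using Cs by simp
    also have "\<dots> = 0"
    proof (cases "C = {}")
      case False
      then obtain y0 where y0: "y0 \<in> C" by auto
      define r0 where "r0 = \<tau>' k y0"
      have sub: "C \<subseteq> {y\<in>space M. \<tau>' k y = r0}"
      proof
        fix y assume y: "y \<in> C"
        have eq: "Fl k (\<tau>' k y) + arctan (\<tau>' k y) = Fl k r0 + arctan r0"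
          using y y0 unfolding C_def r0_def by auto
        have "\<tau>' k y = r0"
        proof (rule ccontr)
          assume "\<tau>' k y \<noteq> r0"
          then consider "\<tau>' k y < r0" | "r0 < \<tau>' k y" by linarith
          then show False
          proof cases
            case 1
            then have "Fl k (\<tau>' k y) \<le> Fl k r0" "arctan (\<tau>' k y) < arctan r0"
              using Flmono by (auto simp: arctan_less_iff)
            then show False using eq by simp
          next
            case 2
            then have "Fl k r0 \<le> Fl k (\<tau>' k y)" "arctan r0 < arctan (\<tau>' k y)"
              using Flmono by (auto simp: arctan_less_iff)
            then show False using eq by simp
          qed
        qed
        then show "y \<in> {y\<in>space M. \<tau>' k y = r0}" using y unfolding C_def by auto
      qed
      have "measure M {y\<in>space M. \<tau>' k y = r0} = 0"
        using y0 Feq[of k r0] unfolding C_def r0_def by simp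
      then have "emeasure M {y\<in>space M. \<tau>' k y = r0} = 0"
        by (simp add: M.emeasure_eq_measure)
      then show ?thesis using emeasure_mono[OF sub, of M] by simp
    qed simp
    finally show ?thesis unfolding Z_def by simp
  qed
  let ?P = "PiM {..<N} (\<lambda>_. M)"
  let ?Q = "PiM {..<N} (\<lambda>_. \<nu>)"
  have mainb: "emeasure ?Q (EE \<nu> s {1..m} {..<N} (space \<nu>) \<alpha>) \<le> ennreal (fb N m \<alpha>)"
  proof -
    have "emeasure ?Q (EE \<nu> s {1..m} {..<N} (space \<nu>) \<alpha>)
        \<le> ennreal (measure \<nu> (space \<nu>) ^ card {..<N} * fb (card {..<N}) (card {1..m}) \<alpha>)"
      by (rule main_lemma[OF fm\<nu> sm _ atomless]) (use mN a0 a1 in auto)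
    then show ?thesis by (simp add: nu.prob_space)
  qed
  define V where "V = (\<lambda>xs. {y\<in>space M. \<exists>k\<in>{1..m}. \<forall>i\<in>{..<N}. \<tau>' k y < \<tau>' k (xs i)})"
  define E where "E = {xs \<in> space ?P. \<alpha> < measure M (V xs)}"
  have Vm: "(\<lambda>xs. measure M (V xs)) \<in> borel_measurable ?P"
    unfolding V_def by (rule measure_pred_measurable[OF M.finite_measure_axioms]) measurable
  have Es: "E \<in> sets ?P" unfolding E_def using Vm by measurable
  have Vs: "V xs \<in> sets M" for xs unfolding V_def by measurable
  have AE: "{xs \<in> space ?P. depthD M le m N xs < 1 - \<alpha>} \<subseteq> E"
  proof
    fix xs assume xs: "xs \<in> {xs \<in> space ?P. depthD M le m N xs < 1 - \<alpha>}"
    have xsp: "xs i \<in> space M" if "i < N" for i using xs that by (auto simp: space_PiM PiE_iff)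
    have hprop: "minent le k N xs \<in> space M \<and> (\<forall>i<N. le k (minent le k N xs) (xs i))" if k: "k \<in> {1..m}" for k
    proof -
      have "0 < N" using k mN by auto
      then have Nne: "{..<N} \<noteq> {}" by (metis lessThan_iff empty_iff)
      define v where "v = Min ((\<lambda>i. \<tau> k (xs i)) ` {..<N})"
      have "v \<in> (\<lambda>i. \<tau> k (xs i)) ` {..<N}" unfolding v_def using Nne by (intro Min_in) auto
      then obtain j where j: "j < N" "\<tau> k (xs j) = v" by auto
      have "\<forall>i<N. le k (xs j) (xs i)"
        using j xsp k unfolding v_def by (auto intro!: tau_ord)
      then have ex: "\<exists>y. y \<in> xs ` {..<N} \<and> (\<forall>i<N. le k y (xs i))" using j by auto
      have "minent le k N xs \<in> xs ` {..<N} \<and> (\<forall>i<N. le k (minent le k N xs) (xs i))"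
        unfolding minent_def by (rule someI_ex[OF ex])
      then show ?thesis using xsp by auto
    qed
    define S where "S = {x \<in> space M. \<forall>k\<in>{1..m}. le k (minent le k N xs) x}"
    have Ts: "{x\<in>space M. le k (minent le k N xs) x} \<in> sets M" if k: "k \<in> {1..m}" for k
    proof -
      let ?h = "minent le k N xs"
      have h: "?h \<in> space M" using hprop[OF k] by auto
      have "{x\<in>space M. le k ?h x} = space M - ({y\<in>space M. le k y ?h} - {y\<in>space M. le k y ?h \<and> le k ?h y})"
        using total[OF k] h by blast
      then show ?thesis using meas_le[OF k h] meas_eq[OF k h] by auto
    qed
    have Ss: "S \<in> sets M"
    proof -
      have "S = space M \<inter> (\<Inter>k\<in>{1..m}. {x\<in>space M. le k (minent le k N xs) x})" unfolding S_def by auto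
      also have "\<dots> \<in> sets M"
      proof (cases "m = 0")
        case True then show ?thesis by simp
      next
        case False
        then show ?thesis using Ts by (intro sets.Int sets.finite_INT) auto
      qed
      finally show ?thesis .
    qed
    have compl: "space M - S \<subseteq> V xs"
    proof
      fix y assume y: "y \<in> space M - S"
      then obtain k where k: "k \<in> {1..m}" and nle: "\<not> le k (minent le k N xs) y" unfolding S_def by auto
      have "\<forall>i\<in>{..<N}. \<tau>' k y < \<tau>' k (xs i)"
      proof (rule ccontr)
        assume "\<not> (\<forall>i\<in>{..<N}. \<tau>' k y < \<tau>' k (xs i))"
        then obtain i where i: "i < N" "\<tau> k (xs i) \<le> \<tau> k y" using tt[OF k] by (auto simp: not_less)
        have "le k (xs i) y" using tau_ord[OF k xsp[OF i(1)] _ i(2)] y by auto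
        moreover have "le k (minent le k N xs) (xs i)" using hprop[OF k] i by auto
        ultimately have "le k (minent le k N xs) y"
          using trans[OF k] hprop[OF k] xsp[OF i(1)] y by blast
        with nle show False by simp
      qed
      then show "y \<in> V xs" using k y unfolding V_def by auto
    qed
    have "1 - depthD M le m N xs = measure M (space M - S)"
      unfolding depthD_def S_def[symmetric] using Ss by (simp add: M.prob_compl)
    also have "\<dots> \<le> measure M (V xs)" using compl Vs by (intro M.finite_measure_mono) auto
    finally have "\<alpha> < measure M (V xs)" using xs by simp
    then show "xs \<in> E" unfolding E_def using xs by simp
  qed
  let ?f = "compose {..<N} fst :: (nat \<Rightarrow> 'a \<times> real) \<Rightarrow> nat \<Rightarrow> 'a"
  have fx: "?f x i = fst (x i)" if "i < N" for x i using that by (simp add: compose_def)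
  have distrP: "distr ?Q ?P ?f = ?P"
  proof -
    have "distr ?Q ?P (compose {..<N} fst) = PiM {..<N} (\<lambda>i. distr \<nu> M fst)"
    proof (rule distr_PiM_finite_prob_space')
      show "finite {..<N}" by simp
      show "prob_space \<nu>" for i using p\<nu> .
      show "prob_space M" for i using pM .
      show "fst \<in> \<nu> \<rightarrow>\<^sub>M M" for i unfolding \<nu>_def by measurable
    qed
    also have "distr \<nu> M fst = M" unfolding \<nu>_def by (rule U.distr_pair_fst)
    finally show ?thesis .
  qed
  have fstm: "?f \<in> ?Q \<rightarrow>\<^sub>M ?P" unfolding compose_def \<nu>_def by measurable
  have "emeasure ?P E = emeasure ?Q (?f -` E \<inter> space ?Q)"
    by (subst distrP[symmetric]) (rule emeasure_distr[OF fstm Es])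
  also have "\<dots> \<le> emeasure ?Q (EE \<nu> s {1..m} {..<N} (space \<nu>) \<alpha>)"
  proof (rule emeasure_mono)
    show "EE \<nu> s {1..m} {..<N} (space \<nu>) \<alpha> \<in> sets ?Q"
      by (rule EE_sets[OF fm\<nu> sm]) auto
    show "?f -` E \<inter> space ?Q \<subseteq> EE \<nu> s {1..m} {..<N} (space \<nu>) \<alpha>"
    proof
      fix x assume x: "x \<in> ?f -` E \<inter> space ?Q"
      have xsp: "x i \<in> space \<nu>" if "i < N" for i using x that by (auto simp: space_PiM PiE_iff)
      have lt: "\<alpha> < measure M (V (?f x))" using x unfolding E_def by auto
      have sub: "V (?f x) \<times> space U \<subseteq> RR \<nu> s {1..m} {..<N} x \<inter> space \<nu>"
      proof
        fix p assume p: "p \<in> V (?f x) \<times> space U"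
        then obtain y u where p': "p = (y, u)" "y \<in> V (?f x)" by auto
        then obtain k where k: "k \<in> {1..m}" and kk: "\<forall>i\<in>{..<N}. \<tau>' k y < \<tau>' k (?f x i)" and ys: "y \<in> space M"
          unfolding V_def by auto
        have all: "\<forall>i\<in>{..<N}. s k (y, u) \<le> s k (x i)"
        proof
          fix i assume i: "i \<in> {..<N}"
          have "\<tau>' k y < \<tau>' k (?f x i)" using kk i by blast
          moreover have "?f x i = fst (x i)" using i fx by blast
          ultimately have "\<tau>' k y < \<tau>' k (fst (x i))" by simp
          then have "s k (y, u) \<le> s k (fst (x i), snd (x i))" by (rule smono[OF k])
          then show "s k (y, u) \<le> s k (x i)" by simp
        qed
        have yu: "(y, u) \<in> space \<nu>" using ys p p' unfolding \<nu>_def by (auto simp: space_pair_measure)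
        show "p \<in> RR \<nu> s {1..m} {..<N} x \<inter> space \<nu>"
          unfolding RR_def using yu all k p'(1) by blast
      qed
      have "measure M (V (?f x)) = measure \<nu> (V (?f x) \<times> space U)"
        unfolding \<nu>_def measure_def by (simp add: U.emeasure_pair_measure_Times Vs U.emeasure_space_1)
      also have "\<dots> \<le> measure \<nu> (RR \<nu> s {1..m} {..<N} x \<inter> space \<nu>)"
        by (rule nu.finite_measure_mono[OF sub]) (auto intro: RR_sets[OF sm])
      finally have "\<alpha> * measure \<nu> (space \<nu>) < measure \<nu> (RR \<nu> s {1..m} {..<N} x \<inter> space \<nu>)"
        using lt by (simp add: nu.prob_space)
      then show "x \<in> EE \<nu> s {1..m} {..<N} (space \<nu>) \<alpha>"
        using x xsp unfolding EE_def by auto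
    qed
  qed
  also have "\<dots> \<le> ennreal (fb N m \<alpha>)" by (rule mainb)
  finally have EP: "emeasure ?P E \<le> ennreal (fb N m \<alpha>)" .
  have "outer_measure_of (completion ?P) {xs \<in> space ?P. depthD M le m N xs < 1 - \<alpha>}
      \<le> outer_measure_of (completion ?P) E"
    by (rule outer_measure_of_mono[OF AE])
  also have "\<dots> = emeasure (completion ?P) E"
    using Es by (simp add: outer_measure_of_eq)
  also have "\<dots> = emeasure ?P E" using Es by (simp add: main_part_sets)
  also have "\<dots> \<le> ennreal (fb N m \<alpha>)" by (rule EP)
  finally show ?thesis unfolding fb_def .
qed

end
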